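(* Let $G=(S,C,H)$ be a thin spider graph with weight $r\ge2$ and $T_H$ an MDNS of $G[H]$. Then: (1) $\tilde\gamma_{gr}^{\times 2}((S_f,C,H))=\tilde\gamma_{gr}^{\times 2}(G)+1=2r+1+\tilde\gamma_{gr}^{\times 2}(G[H])$ and $T_H\oplus(c_1,\dots,c_r,s_1,\dots,s_r,s'_r)$ is an MDNS of $(S_f,C,H)$; (2) if $H=\emptyset$ or $a(G[H])=1$, then $\tilde\gamma_{gr}^{\times 2}((S_t,C,H))=\tilde\gamma_{gr}^{\times 2}(G)+1=2r+1+\tilde\gamma_{gr}^{\times 2}(G[H])$ and $T_H\oplus(s_r,s'_r,c_r,c_1,\dots,c_{r-1},s_1,\dots,s_{r-1})$ is an MDNS of $(S_t,C,H)$; (3) if $H\neq\emptyset$ and $a(G[H])=0$, then $\tilde\gamma_{gr}^{\times 2}((S_t,C,H))=2r+\tilde\gamma_{gr}^{\times 2}(G[H])$ and $T_H\oplus(c_1,\dots,c_r,s_1,\dots,s_r)$ is an MDNS of $(S_t,C,H)$; (4) if $H=\emptyset$, then $\tilde\gamma_{gr}^{\times 2}((S,C_f,H))=\tilde\gamma_{gr}^{\times 2}((S,C_t,H))=\tilde\gamma_{gr}^{\times 2}(G)+1=2r+1$ and $(s_r,c_r,c'_r,c_1,\dots,c_{r-1},s_1,\dots,s_{r-1})$ is an MDNS of both $(S,C_f,H)$ and $(S,C_t,H)$; (5) if $H\neq\emptyset$, then $\tilde\gamma_{gr}^{\times 2}((S,C_f,H))=\tilde\gamma_{gr}^{\times 2}((S,C_t,H))=2r+\tilde\gamma_{gr}^{\times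 2}(G[H])$ and $T_H\oplus(c_1,\dots,c_r,s_1,\dots,s_r)$ is an MDNS of both.
   Context: Graphs are finite, simple, undirected; $N(v)$ open, $N[v]$ closed neighborhood. A sequence of distinct vertices $(v_1,\dots,v_k)$ is a double neighborhood sequence (DNS) if for each $i$ some $u\in N[v_i]$ satisfies $|\{j<i:u\in N[v_j]\}|\le 1$; an MDNS is a DNS of maximum length and $\tilde\gamma_{gr}^{\times 2}$ is that length; for the empty graph it is $0$ with the empty sequence. $\oplus$ is concatenation. $a(X)=1$ if $X$ has an isolated vertex, else $0$. A spider graph $G=(S,C,H)$: $V(G)$ is partitioned into $S=\{s_1,\dots,s_r\}$ (stable), $C=\{c_1,\dots,c_r\}$ (clique), $H$ (possibly empty), $r\ge 2$, all edges between $C$ and $H$, none between $H$ and $S$; thin means $s_ic_j\in E$ iff $i=j$. Quasi-spider graphs: $(S_f,C,H)$ (resp. $(S_t,C,H)$) is obtained from $G$ by adding a new vertex $s'_r$ that is a false twin of $s_r$, i.e. $N(s'_r)=N(s_r)$ (resp. a true twin, i.e. $N[s'_r]=N[s_r]\cup\{s'_r\}$ with $s'_r$ adjacent to $s_r$); $(S,C_f,H)$ and $(S,C_t,H)$ are obtained analogously by adding a false (resp. true) twin $c'_r$ of $c_r$. *)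

theory Defs
  imports Main
begin

definition simple_graph :: "'a set \<Rightarrow> ('a \<Rightarrow> 'a \<Rightarrow> bool) \<Rightarrow> bool" where
  "simple_graph V E \<longleftrightarrow> finite V \<and> (\<forall>u v. E u v \<longrightarrow> E v u) \<and> (\<forall>v. \<not> E v v)
     \<and> (\<forall>u v. E u v \<longrightarrow> u \<in> V \<and> v \<in> V)"

(* closed neighbourhood in the graph (V,E); for an induced subgraph G[H] use (H,E) *)
definition cnb :: "'a set \<Rightarrow> ('a \<Rightarrow> 'a \<Rightarrow> bool) \<Rightarrow> 'a \<Rightarrow> 'a set" where
  "cnb V E v = {u \<in> V. u = v \<or> E v u}"

definition is_DNS :: "'a set \<Rightarrow> ('a \<Rightarrow> 'a \<Rightarrow> bool) \<Rightarrow> 'a list \<Rightarrow> bool" where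
  "is_DNS V E xs \<longleftrightarrow> distinct xs \<and> set xs \<subseteq> V \<and>
     (\<forall>i < length xs. \<exists>u \<in> cnb V E (xs ! i).
         card {j. j < i \<and> u \<in> cnb V E (xs ! j)} \<le> 1)"

definition is_MDNS :: "'a set \<Rightarrow> ('a \<Rightarrow> 'a \<Rightarrow> bool) \<Rightarrow> 'a list \<Rightarrow> bool" where
  "is_MDNS V E xs \<longleftrightarrow> is_DNS V E xs \<and> (\<forall>ys. is_DNS V E ys \<longrightarrow> length ys \<le> length xs)"

definition dns_num :: "'a set \<Rightarrow> ('a \<Rightarrow> 'a \<Rightarrow> bool) \<Rightarrow> nat" where
  "dns_num V E = Max (length ` {xs. is_DNS V E xs})"

definition a_iso :: "'a set \<Rightarrow> ('a \<Rightarrow> 'a \<Rightarrow> bool) \<Rightarrow> nat" where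
  "a_iso V E = (if \<exists>v \<in> V. \<forall>u \<in> V. \<not> E v u then 1 else 0)"

(* thin spider graph (S,C,H) with S = s`{1..r}, C = c`{1..r}, vertex set V *)
definition thin_spider ::
  "'a set \<Rightarrow> ('a \<Rightarrow> 'a \<Rightarrow> bool) \<Rightarrow> nat \<Rightarrow> (nat \<Rightarrow> 'a) \<Rightarrow> (nat \<Rightarrow> 'a) \<Rightarrow> 'a set \<Rightarrow> bool" where
  "thin_spider V E r s c H \<longleftrightarrow> simple_graph V E \<and> r \<ge> 2 \<and>
     inj_on s {1..r} \<and> inj_on c {1..r} \<and>
     s ` {1..r} \<inter> c ` {1..r} = {} \<and> s ` {1..r} \<inter> H = {} \<and> c ` {1..r} \<inter> H = {} \<and>
     V = s ` {1..r} \<union> c ` {1..r} \<union> H \<and>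
     (\<forall>i \<in> {1..r}. \<forall>j \<in> {1..r}. \<not> E (s i) (s j)) \<and>
     (\<forall>i \<in> {1..r}. \<forall>j \<in> {1..r}. i \<noteq> j \<longrightarrow> E (c i) (c j)) \<and>
     (\<forall>i \<in> {1..r}. \<forall>j \<in> {1..r}. E (s i) (c j) \<longleftrightarrow> i = j) \<and>
     (\<forall>i \<in> {1..r}. \<forall>h \<in> H. E (c i) h) \<and>
     (\<forall>i \<in> {1..r}. \<forall>h \<in> H. \<not> E (s i) h)"

(* add a new vertex x as a false twin of v: N(x) = N(v) *)
definition add_false_twin :: "('a \<Rightarrow> 'a \<Rightarrow> bool) \<Rightarrow> 'a \<Rightarrow> 'a \<Rightarrow> 'a \<Rightarrow> 'a \<Rightarrow> bool" where
  "add_false_twin E v x = (\<lambda>a b. E a b \<or> (a = x \<and> b \<noteq> x \<and> E v b) \<or> (b = x \<and> a \<noteq> x \<and> E a v))"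

(* add a new vertex x as a true twin of v: N[x] = N[v] \<union> {x}, x adjacent to v *)
definition add_true_twin :: "('a \<Rightarrow> 'a \<Rightarrow> bool) \<Rightarrow> 'a \<Rightarrow> 'a \<Rightarrow> 'a \<Rightarrow> 'a \<Rightarrow> bool" where
  "add_true_twin E v x = (\<lambda>a b. add_false_twin E v x a b \<or> (a = v \<and> b = x) \<or> (a = x \<and> b = v))"

end

theory Submission
  imports Defs
begin


definition symE :: "('a \<Rightarrow> 'a \<Rightarrow> bool) \<Rightarrow> bool" where
  "symE E \<longleftrightarrow> (\<forall>a b. E a b \<longrightarrow> E b a)"

lemma cnb_sym:
  assumes "symE E" "u \<in> V" "w \<in> V"
  shows "u \<in> cnb V E w \<longleftrightarrow> w \<in> cnb V E u"
  using assms unfolding cnb_def symE_def by auto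

lemma cnb_sub: "cnb V E v \<subseteq> V" by (auto simp: cnb_def)
lemma cnb_self: "v \<in> V \<Longrightarrow> v \<in> cnb V E v" by (auto simp: cnb_def)

lemma cnt_eq:
  assumes "distinct xs" "set xs \<subseteq> V" "u \<in> V" "symE E"
  shows "card {j. j < length xs \<and> u \<in> cnb V E (xs!j)} = card (set xs \<inter> cnb V E u)"
proof -
  have "set xs \<inter> cnb V E u = nth xs ` {j. j < length xs \<and> u \<in> cnb V E (xs!j)}"
  proof
    show "set xs \<inter> cnb V E u \<subseteq> nth xs ` {j. j < length xs \<and> u \<in> cnb V E (xs!j)}"
    proof
      fix w assume w: "w \<in> set xs \<inter> cnb V E u"
      then obtain j where j: "j < length xs" "xs!j = w" by (auto simp: in_set_conv_nth)
      have "u \<in> cnb V E w" using w assms cnb_sym[of E u V w] by auto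
      then show "w \<in> nth xs ` {j. j < length xs \<and> u \<in> cnb V E (xs!j)}" using j by auto
    qed
  next
    show "nth xs ` {j. j < length xs \<and> u \<in> cnb V E (xs!j)} \<subseteq> set xs \<inter> cnb V E u"
    proof
      fix w assume "w \<in> nth xs ` {j. j < length xs \<and> u \<in> cnb V E (xs!j)}"
      then obtain j where j: "j < length xs" "u \<in> cnb V E (xs!j)" "w = xs!j" by auto
      have "w \<in> V" using j assms by (auto dest: nth_mem)
      then show "w \<in> set xs \<inter> cnb V E u" using j assms cnb_sym[of E u V w] by auto
    qed
  qed
  moreover have "inj_on (nth xs) {j. j < length xs \<and> u \<in> cnb V E (xs!j)}"
    using assms(1) by (intro inj_on_nth) auto
  ultimately show ?thesis by (simp add: card_image)
qed

lemma DNS_Nil[simp]: "is_DNS V E []" by (simp add: is_DNS_def)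

lemma DNS_snoc:
  assumes "symE E"
  shows "is_DNS V E (xs @ [v]) \<longleftrightarrow> is_DNS V E xs \<and> v \<notin> set xs \<and> v \<in> V \<and>
     (\<exists>u \<in> cnb V E v. card (set xs \<inter> cnb V E u) \<le> 1)"
proof -
  have A: "(\<forall>i < length (xs@[v]). P i) \<longleftrightarrow> (\<forall>i < length xs. P i) \<and> P (length xs)" for P
    by (auto simp: less_Suc_eq)
  have B: "{j. j < i \<and> Q ((xs@[v])!j)} = {j. j < i \<and> Q (xs!j)}" if "i \<le> length xs" for i Q
    using that by (auto simp: nth_append)
  have C: "{j. j < length xs \<and> u \<in> cnb V E (xs!j)} = {j. j < length xs \<and> u \<in> cnb V E (xs!j)}" for u by simp
  show ?thesis
  proof
    assume H: "is_DNS V E (xs @ [v])"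
    then have d: "distinct xs" "set xs \<subseteq> V" "v \<notin> set xs" "v \<in> V" by (auto simp: is_DNS_def)
    from H have all: "\<forall>i<length xs. \<exists>u\<in>cnb V E ((xs@[v]) ! i). card {j. j < i \<and> u \<in> cnb V E ((xs@[v]) ! j)} \<le> 1"
      and last: "\<exists>u\<in>cnb V E ((xs@[v]) ! length xs). card {j. j < length xs \<and> u \<in> cnb V E ((xs@[v]) ! j)} \<le> 1"
      unfolding is_DNS_def A by auto
    have "is_DNS V E xs" unfolding is_DNS_def
    proof (intro conjI allI impI)
      fix i assume i: "i < length xs"
      then obtain u where "u\<in>cnb V E ((xs@[v]) ! i)" "card {j. j < i \<and> u \<in> cnb V E ((xs@[v]) ! j)} \<le> 1"
        using all by blast
      moreover have "(xs@[v]) ! i = xs ! i" using i by (simp add: nth_append)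
      moreover have "{j. j < i \<and> u \<in> cnb V E ((xs@[v]) ! j)} = {j. j < i \<and> u \<in> cnb V E (xs ! j)}"
        using B[of i] i by simp
      ultimately show "\<exists>u\<in>cnb V E (xs ! i). card {j. j < i \<and> u \<in> cnb V E (xs ! j)} \<le> 1" by auto
    qed (use d in auto)
    moreover obtain u where u0: "u \<in> cnb V E ((xs@[v]) ! length xs)" "card {j. j < length xs \<and> u \<in> cnb V E ((xs@[v]) ! j)} \<le> 1"
      using last by blast
    moreover have u: "u \<in> cnb V E v" "card {j. j < length xs \<and> u \<in> cnb V E (xs ! j)} \<le> 1"
      using u0 B[of "length xs" "\<lambda>w. u \<in> cnb V E w"] by simp_all
    moreover have "u \<in> V" using u cnb_sub[of V E v] by auto
    ultimately show "is_DNS V E xs \<and> v \<notin> set xs \<and> v \<in> V \<and> (\<exists>u \<in> cnb V E v. card (set xs \<inter> cnb V E u) \<le> 1)"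
      using d cnt_eq[OF d(1,2) _ assms] by auto
  next
    assume H: "is_DNS V E xs \<and> v \<notin> set xs \<and> v \<in> V \<and> (\<exists>u \<in> cnb V E v. card (set xs \<inter> cnb V E u) \<le> 1)"
    then have d: "distinct xs" "set xs \<subseteq> V" "v \<notin> set xs" "v \<in> V" by (auto simp: is_DNS_def)
    from H obtain u where u: "u \<in> cnb V E v" "card (set xs \<inter> cnb V E u) \<le> 1" by auto
    have uV: "u \<in> V" using u cnb_sub[of V E v] by auto
    have last: "\<exists>u\<in>cnb V E ((xs@[v]) ! length xs). card {j. j < length xs \<and> u \<in> cnb V E ((xs@[v]) ! j)} \<le> 1"
    proof (rule bexI[of _ u])
      have e: "{j. j < length xs \<and> u \<in> cnb V E ((xs @ [v]) ! j)} = {j. j < length xs \<and> u \<in> cnb V E (xs ! j)}"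
        by (rule B) simp
      show "card {j. j < length xs \<and> u \<in> cnb V E ((xs @ [v]) ! j)} \<le> 1"
        unfolding e using u cnt_eq[OF d(1,2) uV assms] by linarith
      show "u \<in> cnb V E ((xs @ [v]) ! length xs)" using u by simp
    qed
    have all: "\<forall>i<length xs. \<exists>u\<in>cnb V E ((xs@[v]) ! i). card {j. j < i \<and> u \<in> cnb V E ((xs@[v]) ! j)} \<le> 1"
    proof (intro allI impI)
      fix i assume i: "i < length xs"
      then obtain u where "u\<in>cnb V E (xs ! i)" "card {j. j < i \<and> u \<in> cnb V E (xs ! j)} \<le> 1"
        using H by (auto simp: is_DNS_def)
      moreover have "(xs@[v]) ! i = xs ! i" using i by (simp add: nth_append)
      moreover have "{j. j < i \<and> u \<in> cnb V E ((xs@[v]) ! j)} = {j. j < i \<and> u \<in> cnb V E (xs ! j)}"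
        using B[of i] i by simp
      ultimately show "\<exists>u\<in>cnb V E ((xs@[v]) ! i). card {j. j < i \<and> u \<in> cnb V E ((xs@[v]) ! j)} \<le> 1"
        by (metis (no_types, lifting))
    qed
    show "is_DNS V E (xs @ [v])" unfolding is_DNS_def A using d last all by auto
  qed
qed

lemma DNS_prefix:
  assumes "symE E" "is_DNS V E (xs @ ys)" shows "is_DNS V E xs"
  using assms(2)
proof (induction ys rule: rev_induct)
  case Nil then show ?case by simp
next
  case (snoc y ys) then show ?case using DNS_snoc[OF assms(1), of V "xs@ys" y] by simp
qed

lemma DNS_app1:
  assumes "symE E" "is_DNS V E xs" "v \<notin> set xs" "v \<in> V" "u \<in> cnb V E v"
    "card (set xs \<inter> cnb V E u) \<le> 1"
  shows "is_DNS V E (xs @ [v])"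
  using assms DNS_snoc[OF assms(1)] by blast

lemma DNS_len:
  assumes "is_DNS V E xs" "finite V" shows "length xs \<le> card V"
proof -
  have "length xs = card (set xs)" using assms by (auto simp: is_DNS_def distinct_card)
  also have "\<dots> \<le> card V" using assms by (auto simp: is_DNS_def intro: card_mono)
  finally show ?thesis .
qed

lemma dns_num_eq:
  assumes "finite V" "is_MDNS V E xs" shows "dns_num V E = length xs"
proof -
  have "length ` {xs. is_DNS V E xs} \<subseteq> {..card V}" using DNS_len assms(1) by fastforce
  then have f: "finite (length ` {xs. is_DNS V E xs})" by (rule finite_subset) simp
  show ?thesis unfolding dns_num_def
    using assms(2) by (intro Max_eqI[OF f]) (auto simp: is_MDNS_def)
qed

lemma card_le1_two:
  assumes "card A \<le> 1" "finite A" "a \<in> A" "b \<in> A" "a \<noteq> b" shows False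
  using assms card_le_Suc0_iff_eq[OF assms(2)] by auto

lemma DNS_transfer:
  assumes "is_DNS H E xs" "H \<subseteq> V'" "\<forall>a\<in>H. \<forall>b\<in>H. E' a b = E a b"
  shows "is_DNS V' E' xs"
proof -
  have eq: "u \<in> cnb V' E' w \<longleftrightarrow> u \<in> cnb H E w" if "u \<in> H" "w \<in> H" for u w
    using that assms(2,3) by (auto simp: cnb_def)
  have sub: "cnb H E w \<subseteq> cnb V' E' w" if "w \<in> H" for w
    using that assms(2,3) by (auto simp: cnb_def)
  show ?thesis unfolding is_DNS_def
  proof (intro conjI allI impI)
    show "distinct xs" using assms(1) by (simp add: is_DNS_def)
    show "set xs \<subseteq> V'" using assms(1,2) by (auto simp: is_DNS_def)
    fix i assume i: "i < length xs"
    then obtain u where u: "u \<in> cnb H E (xs!i)" "card {j. j < i \<and> u \<in> cnb H E (xs ! j)} \<le> 1"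
      using assms(1) by (auto simp: is_DNS_def)
    have xH: "\<And>j. j < length xs \<Longrightarrow> xs!j \<in> H" using assms(1) by (auto simp: is_DNS_def)
    have uH: "u \<in> H" using u cnb_sub[of H E "xs!i"] by auto
    have "{j. j < i \<and> u \<in> cnb V' E' (xs ! j)} = {j. j < i \<and> u \<in> cnb H E (xs ! j)}"
      using eq[OF uH] xH i by auto
    then show "\<exists>u\<in>cnb V' E' (xs ! i). card {j. j < i \<and> u \<in> cnb V' E' (xs ! j)} \<le> 1"
      using u sub[OF xH[OF i]] by (metis (no_types, lifting) subsetD)
  qed
qed



lemma DNS_filter:
  assumes sE': "symE E'" and sE: "symE E" and D: "is_DNS V' E' ys" and HV: "H \<subseteq> V'"
    and agree: "\<forall>a\<in>H. \<forall>b\<in>H. E' a b = E a b"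
    and out: "\<forall>h\<in>H. \<forall>u\<in>cnb V' E' h. u \<notin> H \<longrightarrow> H \<subseteq> cnb V' E' u"
  shows "is_DNS H E (filter (\<lambda>v. v \<in> H) ys)"
  using D
proof (induction ys rule: rev_induct)
  case Nil then show ?case by simp
next
  case (snoc v ys)
  have Dys: "is_DNS V' E' ys" and vn: "v \<notin> set ys" and vV: "v \<in> V'"
    and wu: "\<exists>u \<in> cnb V' E' v. card (set ys \<inter> cnb V' E' u) \<le> 1"
    using snoc.prems DNS_snoc[OF sE'] by blast+
  have IH: "is_DNS H E (filter (\<lambda>v. v \<in> H) ys)" using snoc.IH[OF Dys] .
  show ?case
  proof (cases "v \<in> H")
    case False then show ?thesis using IH by simp
  next
    case vH: True
    obtain u where u: "u \<in> cnb V' E' v" "card (set ys \<inter> cnb V' E' u) \<le> 1" using wu by blast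
    have fin: "finite (set ys \<inter> cnb V' E' u)" by simp
    have "\<exists>w \<in> cnb H E v. card (set (filter (\<lambda>v. v \<in> H) ys) \<inter> cnb H E w) \<le> 1"
    proof (cases "u \<in> H")
      case True
      have "u \<in> cnb H E v" using u True vH agree by (auto simp: cnb_def)
      moreover have "set (filter (\<lambda>v. v \<in> H) ys) \<inter> cnb H E u \<subseteq> set ys \<inter> cnb V' E' u"
        using True agree HV by (auto simp: cnb_def)
      then have "card (set (filter (\<lambda>v. v \<in> H) ys) \<inter> cnb H E u) \<le> 1"
        using card_mono[OF fin] u(2) by (meson le_trans)
      ultimately show ?thesis by blast
    next
      case False
      then have "H \<subseteq> cnb V' E' u" using out vH u(1) by blast
      then have "set (filter (\<lambda>v. v \<in> H) ys) \<inter> cnb H E v \<subseteq> set ys \<inter> cnb V' E' u"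
        by (auto simp: cnb_def)
      then have "card (set (filter (\<lambda>v. v \<in> H) ys) \<inter> cnb H E v) \<le> 1"
        using card_mono[OF fin] u(2) by (meson le_trans)
      moreover have "v \<in> cnb H E v" using vH by (simp add: cnb_self)
      ultimately show ?thesis by blast
    qed
    then have "is_DNS H E (filter (\<lambda>v. v \<in> H) ys @ [v])"
      using DNS_snoc[OF sE] IH vn vH by auto
    then show ?thesis using vH by simp
  qed
qed

lemma DNS_upper:
  assumes sE': "symE E'" and sE: "symE E" and D: "is_DNS V' E' ys" and HV: "H \<subseteq> V'"
    and fin: "finite V'"
    and agree: "\<forall>a\<in>H. \<forall>b\<in>H. E' a b = E a b"
    and out: "\<forall>h\<in>H. \<forall>u\<in>cnb V' E' h. u \<notin> H \<longrightarrow> H \<subseteq> cnb V' E' u"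
    and M: "is_MDNS H E T"
  shows "length ys \<le> length T + card (V' - H)"
    and "length ys = length T + card (V' - H) \<Longrightarrow>
           V' - H \<subseteq> set ys \<and> card (set ys \<inter> H) = length T"
proof -
  let ?F = "filter (\<lambda>v. v \<in> H) ys"
  have DF: "is_DNS H E ?F" by (rule DNS_filter[OF assms(1-4) agree out])
  have lF: "length ?F \<le> length T" using DF M by (auto simp: is_MDNS_def)
  have dys: "distinct ys" "set ys \<subseteq> V'" using D by (auto simp: is_DNS_def)
  have "length ?F = card (set ?F)" using dys by (metis distinct_card distinct_filter)
  also have "set ?F = set ys \<inter> H" by auto
  finally have cF: "card (set ys \<inter> H) = length ?F" by simp
  have "length ys = card (set ys)" using dys by (simp add: distinct_card)
  also have "set ys = (set ys \<inter> H) \<union> (set ys - H)" by blast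
  also have "card \<dots> = card (set ys \<inter> H) + card (set ys - H)"
    by (rule card_Un_disjoint) auto
  finally have L: "length ys = card (set ys \<inter> H) + card (set ys - H)" .
  have sub: "set ys - H \<subseteq> V' - H" using dys by auto
  have c2: "card (set ys - H) \<le> card (V' - H)" using fin sub by (intro card_mono) auto
  show "length ys \<le> length T + card (V' - H)" using L cF lF c2 by linarith
  assume eq: "length ys = length T + card (V' - H)"
  then have "card (set ys - H) = card (V' - H)" using L cF lF c2 by linarith
  then have "set ys - H = V' - H" using fin sub by (intro card_subset_eq) auto
  then show "V' - H \<subseteq> set ys \<and> card (set ys \<inter> H) = length T" using eq L cF lF c2 by auto
qed

lemma saturate:
  assumes sE: "symE E" and M: "is_MDNS H E T" and DF: "is_DNS H E F" and lF: "length F = length T"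
    and y: "y \<in> H" "y \<notin> set F" and t: "t \<in> cnb H E y"
  shows "2 \<le> card (set F \<inter> cnb H E t)"
proof (rule ccontr)
  assume "\<not> 2 \<le> card (set F \<inter> cnb H E t)"
  then have "card (set F \<inter> cnb H E t) \<le> 1" by simp
  then have "is_DNS H E (F @ [y])" using DNS_app1[OF sE DF y(2) y(1) t] by blast
  then have "length (F @ [y]) \<le> length T" using M by (auto simp: is_MDNS_def)
  then show False using lF by simp
qed



locale spid =
  fixes V :: "'a set" and E :: "'a \<Rightarrow> 'a \<Rightarrow> bool" and r :: nat
    and s c :: "nat \<Rightarrow> 'a" and H :: "'a set" and T :: "'a list" and x :: 'a
  assumes spider: "thin_spider V E r s c H"
    and TH: "is_MDNS H E T"
    and fresh: "x \<notin> V"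
begin

abbreviation "Ss \<equiv> s ` {1..r}"
abbreviation "Cs \<equiv> c ` {1..r}"

lemma sp: "simple_graph V E \<and> r \<ge> 2 \<and>
     inj_on s {1..r} \<and> inj_on c {1..r} \<and>
     s ` {1..r} \<inter> c ` {1..r} = {} \<and> s ` {1..r} \<inter> H = {} \<and> c ` {1..r} \<inter> H = {} \<and>
     V = s ` {1..r} \<union> c ` {1..r} \<union> H \<and>
     (\<forall>i \<in> {1..r}. \<forall>j \<in> {1..r}. \<not> E (s i) (s j)) \<and>
     (\<forall>i \<in> {1..r}. \<forall>j \<in> {1..r}. i \<noteq> j \<longrightarrow> E (c i) (c j)) \<and>
     (\<forall>i \<in> {1..r}. \<forall>j \<in> {1..r}. E (s i) (c j) \<longleftrightarrow> i = j) \<and>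
     (\<forall>i \<in> {1..r}. \<forall>h \<in> H. E (c i) h) \<and>
     (\<forall>i \<in> {1..r}. \<forall>h \<in> H. \<not> E (s i) h)" using spider unfolding thin_spider_def .
lemma sg: "simple_graph V E" using sp by (elim conjE) assumption
lemma finV: "finite V" using sg by (simp add: simple_graph_def)
lemma symE: "symE E" using sg by (simp add: simple_graph_def symE_def)
lemma irr[simp]: "\<not> E v v" using sg by (simp add: simple_graph_def)
lemma EV: "E a b \<Longrightarrow> a \<in> V \<and> b \<in> V" using sg by (simp add: simple_graph_def)
lemma r2: "r \<ge> 2" using sp by (elim conjE) assumption
lemma injs: "inj_on s {1..r}" using sp by (elim conjE) assumption
lemma injc: "inj_on c {1..r}" using sp by (elim conjE) assumption
lemma Vdef: "V = Ss \<union> Cs \<union> H" using sp by (elim conjE) assumption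
lemma disjSC: "Ss \<inter> Cs = {}" using sp by (elim conjE) assumption
lemma disjSH: "Ss \<inter> H = {}" using sp by (elim conjE) assumption
lemma disjCH: "Cs \<inter> H = {}" using sp by (elim conjE) assumption

lemma SSe: "\<forall>i \<in> {1..r}. \<forall>j \<in> {1..r}. \<not> E (s i) (s j)" using sp by (elim conjE) assumption
lemma CCe: "\<forall>i \<in> {1..r}. \<forall>j \<in> {1..r}. i \<noteq> j \<longrightarrow> E (c i) (c j)" using sp by (elim conjE) assumption
lemma SCe: "\<forall>i \<in> {1..r}. \<forall>j \<in> {1..r}. E (s i) (c j) \<longleftrightarrow> i = j" using sp by (elim conjE) assumption
lemma CHe: "\<forall>i \<in> {1..r}. \<forall>h \<in> H. E (c i) h" using sp by (elim conjE) assumption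
lemma SHe: "\<forall>i \<in> {1..r}. \<forall>h \<in> H. \<not> E (s i) h" using sp by (elim conjE) assumption

lemma s_ne_c[simp]: "i \<in> {1..r} \<Longrightarrow> j \<in> {1..r} \<Longrightarrow> s i \<noteq> c j" using disjSC by blast
lemma c_ne_s[simp]: "i \<in> {1..r} \<Longrightarrow> j \<in> {1..r} \<Longrightarrow> c i \<noteq> s j" using disjSC by blast
lemma s_notH[simp]: "i \<in> {1..r} \<Longrightarrow> s i \<notin> H" using disjSH by blast
lemma c_notH[simp]: "i \<in> {1..r} \<Longrightarrow> c i \<notin> H" using disjCH by blast
lemma s_eq[simp]: "i \<in> {1..r} \<Longrightarrow> j \<in> {1..r} \<Longrightarrow> s i = s j \<longleftrightarrow> i = j" using injs by (auto dest: inj_onD)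
lemma c_eq[simp]: "i \<in> {1..r} \<Longrightarrow> j \<in> {1..r} \<Longrightarrow> c i = c j \<longleftrightarrow> i = j" using injc by (auto dest: inj_onD)
lemma sV[simp]: "i \<in> {1..r} \<Longrightarrow> s i \<in> V" using Vdef by blast
lemma cV[simp]: "i \<in> {1..r} \<Longrightarrow> c i \<in> V" using Vdef by blast
lemma HV: "H \<subseteq> V" using Vdef by blast
lemma hV: "h \<in> H \<Longrightarrow> h \<in> V" using Vdef by blast
lemma x_ne[simp]: "i \<in> {1..r} \<Longrightarrow> x \<noteq> s i" "i \<in> {1..r} \<Longrightarrow> x \<noteq> c i"
   "i \<in> {1..r} \<Longrightarrow> s i \<noteq> x" "i \<in> {1..r} \<Longrightarrow> c i \<noteq> x" using fresh by auto
lemma xH[simp]: "x \<notin> H" using fresh HV by auto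
lemma Ex1[simp]: "\<not> E x b" "\<not> E b x" using fresh EV by blast+
lemma finH: "finite H" using finV HV finite_subset by blast
lemma r_in[simp]: "r \<in> {1..r}" "1 \<in> {1..r}" using r2 by auto
lemma r_ge[simp]: "Suc 0 \<le> r" "1 \<le> r" "0 < r" "Suc 0 < r" "1 < r" using r2 by auto
lemma one_ne_r[simp]: "(1::nat) \<noteq> r" "r \<noteq> 1" using r2 by auto

lemma Es_iff[simp]: "i \<in> {1..r} \<Longrightarrow> E (s i) b \<longleftrightarrow> b = c i"
proof -
  assume i: "i \<in> {1..r}"
  show ?thesis
  proof
    assume e: "E (s i) b"
    then have "b \<in> V" using EV by blast
    then have "b \<in> Ss \<or> b \<in> Cs \<or> b \<in> H" using Vdef by blast
    moreover have "b \<notin> Ss" using e i SSe by auto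
    moreover have "b \<notin> H" using e i SHe by auto
    ultimately obtain j where j: "j \<in> {1..r}" "b = c j" by blast
    then show "b = c i" using e i SCe by auto
  qed (use i SCe in blast)
qed

lemma Es_iff'[simp]: "i \<in> {1..r} \<Longrightarrow> E b (s i) \<longleftrightarrow> b = c i"
  using Es_iff symE unfolding symE_def by blast

lemma Ecc[simp]: "i \<in> {1..r} \<Longrightarrow> j \<in> {1..r} \<Longrightarrow> E (c i) (c j) \<longleftrightarrow> i \<noteq> j"
  using CCe irr by blast
lemma EcH[simp]: "i \<in> {1..r} \<Longrightarrow> h \<in> H \<Longrightarrow> E (c i) h"
  using CHe by blast
lemma EHc[simp]: "i \<in> {1..r} \<Longrightarrow> h \<in> H \<Longrightarrow> E h (c i)"
  using EcH symE unfolding symE_def by blast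

lemma Ec_cases: "i \<in> {1..r} \<Longrightarrow> E (c i) b \<Longrightarrow> b = s i \<or> b \<in> H \<or> (\<exists>j\<in>{1..r}. b = c j \<and> j \<noteq> i)"
proof -
  assume i: "i \<in> {1..r}" and e: "E (c i) b"
  then have "b \<in> V" using EV by blast
  then show ?thesis using e i Vdef Es_iff' by auto
qed

lemma EH_cases: "h \<in> H \<Longrightarrow> E h b \<Longrightarrow> b \<in> H \<or> (\<exists>j\<in>{1..r}. b = c j)"
proof -
  assume h: "h \<in> H" and e: "E h b"
  then have "b \<in> V" using EV by blast
  then show ?thesis using e h Vdef Es_iff' by auto
qed

lemma T_H: "set T \<subseteq> H" "distinct T" using TH by (auto simp: is_MDNS_def is_DNS_def)
lemma nH: "dns_num H E = length T" using dns_num_eq[OF finH TH] .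

end


lemma sym_ft: "symE E \<Longrightarrow> symE (add_false_twin E v x)"
  unfolding symE_def add_false_twin_def by blast
lemma sym_tt: "symE E \<Longrightarrow> symE (add_true_twin E v x)"
  unfolding symE_def add_true_twin_def add_false_twin_def by blast

context spid begin

lemma seq_C:
  assumes sE': "symE E'" and DT: "is_DNS V' E' T" and SCV: "Ss \<union> Cs \<subseteq> V'"
    and Ns: "\<forall>i\<in>{1..r}. cnb V' E' (s i) \<subseteq> {s i, c i, x}"
    and Ecs: "\<forall>i\<in>{1..r}. E' (c i) (s i)"
  shows "k \<le> r \<Longrightarrow> is_DNS V' E' (T @ map c [1..<k+1])"
proof (induction k)
  case 0 then show ?case using DT by simp
next
  case (Suc k)
  let ?pre = "T @ map c [1..<k+1]"
  have i: "Suc k \<in> {1..r}" using Suc.prems by simp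
  have D: "is_DNS V' E' ?pre" using Suc by simp
  have nin: "c (Suc k) \<notin> set ?pre" using T_H(1) i by auto
  have cV: "c (Suc k) \<in> V'" "s (Suc k) \<in> V'" using SCV i by auto
  have w: "s (Suc k) \<in> cnb V' E' (c (Suc k))" using cV Ecs i by (auto simp: cnb_def)
  have "set ?pre \<inter> cnb V' E' (s (Suc k)) \<subseteq> set ?pre \<inter> {s (Suc k), c (Suc k), x}" using Ns i by blast
  also have "\<dots> = {}" using T_H(1) i by auto
  finally have "card (set ?pre \<inter> cnb V' E' (s (Suc k))) \<le> 1" by simp
  then have "is_DNS V' E' (?pre @ [c (Suc k)])" using DNS_app1[OF sE' D nin cV(1) w] by blast
  then show ?case by simp
qed

lemma seq_CS:
  assumes sE': "symE E'" and DT: "is_DNS V' E' T" and SCV: "Ss \<union> Cs \<subseteq> V'"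
    and Ns: "\<forall>i\<in>{1..r}. cnb V' E' (s i) \<subseteq> {s i, c i, x}"
    and Ecs: "\<forall>i\<in>{1..r}. E' (c i) (s i)"
  shows "k \<le> r \<Longrightarrow> is_DNS V' E' (T @ map c [1..<r+1] @ map s [1..<k+1])"
proof (induction k)
  case 0 then show ?case using seq_C[OF assms, of r] by simp
next
  case (Suc k)
  let ?pre = "T @ map c [1..<r+1] @ map s [1..<k+1]"
  have i: "Suc k \<in> {1..r}" using Suc.prems by simp
  have D: "is_DNS V' E' ?pre" using Suc by simp
  have nin: "s (Suc k) \<notin> set ?pre" using T_H(1) i by auto
  have sV: "s (Suc k) \<in> V'" using SCV i by auto
  have w: "s (Suc k) \<in> cnb V' E' (s (Suc k))" using sV by (auto simp: cnb_def)
  have "set ?pre \<inter> cnb V' E' (s (Suc k)) \<subseteq> set ?pre \<inter> {s (Suc k), c (Suc k), x}" using Ns i by blast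
  also have "\<dots> \<subseteq> {c (Suc k)}" using T_H(1) i by auto
  finally have "card (set ?pre \<inter> cnb V' E' (s (Suc k))) \<le> card {c (Suc k)}"
    by (intro card_mono) auto
  then have "card (set ?pre \<inter> cnb V' E' (s (Suc k))) \<le> 1" by simp
  then have "is_DNS V' E' (?pre @ [s (Suc k)])" using DNS_app1[OF sE' D nin sV w] by blast
  then show ?case by simp
qed

end


context spid begin

definition good :: "'a set \<Rightarrow> ('a \<Rightarrow> 'a \<Rightarrow> bool) \<Rightarrow> bool" where
  "good V' E' \<longleftrightarrow> finite V' \<and> symE E' \<and> H \<subseteq> V' \<and> Ss \<union> Cs \<subseteq> V' \<and>
     (\<forall>a\<in>H. \<forall>b\<in>H. E' a b = E a b) \<and>
     (\<forall>h\<in>H. \<forall>u\<in>cnb V' E' h. u \<notin> H \<longrightarrow> H \<subseteq> cnb V' E' u) \<and>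
     (\<forall>i\<in>{1..r}. cnb V' E' (s i) \<subseteq> {s i, c i, x}) \<and>
     (\<forall>i\<in>{1..r}. E' (c i) (s i))"

lemma good_G: "good V E"
  unfolding good_def
proof (intro conjI ballI impI)
  show "finite V" by (rule finV)
  show "symE E" by (rule symE)
  show "H \<subseteq> V" by (rule HV)
  show "Ss \<union> Cs \<subseteq> V" using Vdef by blast
  fix h u assume h: "h \<in> H" and u: "u \<in> cnb V E h" "u \<notin> H"
  then have "E h u" by (auto simp: cnb_def)
  then obtain j where j: "j \<in> {1..r}" "u = c j" using EH_cases h u by blast
  show "H \<subseteq> cnb V E u" using j hV by (auto simp: cnb_def)
qed (auto simp: cnb_def)

lemma good_Sf: "good (insert x V) (add_false_twin E (s r) x)"
  unfolding good_def
proof (intro conjI ballI impI)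
  show "finite (insert x V)" using finV by simp
  show "symE (add_false_twin E (s r) x)" by (rule sym_ft[OF symE])
  show "H \<subseteq> insert x V" using HV by blast
  show "Ss \<union> Cs \<subseteq> insert x V" using Vdef by blast
  fix h u assume h: "h \<in> H" and u: "u \<in> cnb (insert x V) (add_false_twin E (s r) x) h" "u \<notin> H"
  then have "E h u" using h by (auto simp: cnb_def add_false_twin_def)
  then obtain j where j: "j \<in> {1..r}" "u = c j" using EH_cases h u by blast
  show "H \<subseteq> cnb (insert x V) (add_false_twin E (s r) x) u" using j hV by (auto simp: cnb_def add_false_twin_def)
qed (auto simp: cnb_def add_false_twin_def)

lemma good_St: "good (insert x V) (add_true_twin E (s r) x)"
  unfolding good_def
proof (intro conjI ballI impI)
  show "finite (insert x V)" using finV by simp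
  show "symE (add_true_twin E (s r) x)" by (rule sym_tt[OF symE])
  show "H \<subseteq> insert x V" using HV by blast
  show "Ss \<union> Cs \<subseteq> insert x V" using Vdef by blast
  fix h u assume h: "h \<in> H" and u: "u \<in> cnb (insert x V) (add_true_twin E (s r) x) h" "u \<notin> H"
  then have "E h u" using h by (auto simp: cnb_def add_true_twin_def add_false_twin_def)
  then obtain j where j: "j \<in> {1..r}" "u = c j" using EH_cases h u by blast
  show "H \<subseteq> cnb (insert x V) (add_true_twin E (s r) x) u" using j hV by (auto simp: cnb_def add_true_twin_def add_false_twin_def)
qed (auto simp: cnb_def add_true_twin_def add_false_twin_def)

lemma good_Cf: "good (insert x V) (add_false_twin E (c r) x)"
  unfolding good_def
proof (intro conjI ballI impI)
  show "finite (insert x V)" using finV by simp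
  show "symE (add_false_twin E (c r) x)" by (rule sym_ft[OF symE])
  show "H \<subseteq> insert x V" using HV by blast
  show "Ss \<union> Cs \<subseteq> insert x V" using Vdef by blast
  fix h u assume h: "h \<in> H" and u: "u \<in> cnb (insert x V) (add_false_twin E (c r) x) h" "u \<notin> H"
  then have "E h u \<or> u = x" using h by (auto simp: cnb_def add_false_twin_def)
  then show "H \<subseteq> cnb (insert x V) (add_false_twin E (c r) x) u"
  proof
    assume "E h u"
    then obtain j where j: "j \<in> {1..r}" "u = c j" using EH_cases h u by blast
    show ?thesis using j hV by (auto simp: cnb_def add_false_twin_def)
  next
    assume "u = x" then show ?thesis using hV by (auto simp: cnb_def add_false_twin_def)
  qed
qed (auto simp: cnb_def add_false_twin_def)

lemma good_Ct: "good (insert x V) (add_true_twin E (c r) x)"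
  unfolding good_def
proof (intro conjI ballI impI)
  show "finite (insert x V)" using finV by simp
  show "symE (add_true_twin E (c r) x)" by (rule sym_tt[OF symE])
  show "H \<subseteq> insert x V" using HV by blast
  show "Ss \<union> Cs \<subseteq> insert x V" using Vdef by blast
  fix h u assume h: "h \<in> H" and u: "u \<in> cnb (insert x V) (add_true_twin E (c r) x) h" "u \<notin> H"
  then have "E h u \<or> u = x" using h by (auto simp: cnb_def add_true_twin_def add_false_twin_def)
  then show "H \<subseteq> cnb (insert x V) (add_true_twin E (c r) x) u"
  proof
    assume "E h u"
    then obtain j where j: "j \<in> {1..r}" "u = c j" using EH_cases h u by blast
    show ?thesis using j hV by (auto simp: cnb_def add_true_twin_def add_false_twin_def)
  next
    assume "u = x" then show ?thesis using hV by (auto simp: cnb_def add_true_twin_def add_false_twin_def)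
  qed
qed (auto simp: cnb_def add_true_twin_def add_false_twin_def)

lemma good_DT: "good V' E' \<Longrightarrow> is_DNS V' E' T"
  using TH by (intro DNS_transfer[of H E T V' E']) (auto simp: good_def is_MDNS_def)

lemma good_seq: "good V' E' \<Longrightarrow> is_DNS V' E' (T @ map c [1..<r+1] @ map s [1..<r+1])"
  using seq_CS[of E' V' r] good_DT unfolding good_def by blast

lemma good_upper:
  assumes "good V' E'" "is_DNS V' E' ys"
  shows "length ys \<le> length T + card (V' - H)"
    and "length ys = length T + card (V' - H) \<Longrightarrow>
           V' - H \<subseteq> set ys \<and> card (set ys \<inter> H) = length T"
  using DNS_upper[of E' E V' ys H T] assms symE TH unfolding good_def by blast+

lemma card_SC: "card (Ss \<union> Cs) = 2 * r"
proof -
  have "card (Ss \<union> Cs) = card Ss + card Cs" using disjSC by (intro card_Un_disjoint) auto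
  also have "card Ss = r" using injs by (simp add: card_image)
  also have "card Cs = r" using injc by (simp add: card_image)
  finally show ?thesis by simp
qed

lemma VmH: "V - H = Ss \<union> Cs" using Vdef disjSH disjCH by blast
lemma card_VmH: "card (V - H) = 2 * r" using VmH card_SC by simp
lemma card_VxmH: "card (insert x V - H) = 2 * r + 1"
proof -
  have "insert x V - H = insert x (V - H)" by auto
  moreover have "x \<notin> V - H" using fresh by auto
  moreover have "finite (V - H)" using finV by simp
  ultimately show ?thesis using card_VmH by simp
qed

lemma len_seq: "length (T @ map c [1..<r+1] @ map s [1..<r+1]) = length T + 2 * r" by simp

lemma dns_G: "dns_num V E = 2 * r + length T"
proof -
  have "is_MDNS V E (T @ map c [1..<r+1] @ map s [1..<r+1])"
    unfolding is_MDNS_def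
  proof (intro conjI allI impI)
    show "is_DNS V E (T @ map c [1..<r+1] @ map s [1..<r+1])" by (rule good_seq[OF good_G])
    fix ys assume "is_DNS V E ys"
    then have "length ys \<le> length T + card (V - H)" by (rule good_upper(1)[OF good_G])
    then show "length ys \<le> length (T @ map c [1..<r+1] @ map s [1..<r+1])"
      unfolding len_seq card_VmH .
  qed
  then show ?thesis using dns_num_eq[OF finV] len_seq by simp
qed

end


lemma card_le1_sub: "A \<subseteq> {a} \<Longrightarrow> card A \<le> 1"
  using card_mono[of "{a}" A] by auto

context spid begin

lemma seq_C':
  assumes sE': "symE E'" and DP: "is_DNS V' E' P" and SCV: "Ss \<union> Cs \<subseteq> V'" and m: "m \<le> r"
    and Ns: "\<forall>i\<in>{1..m}. cnb V' E' (s i) \<subseteq> {s i, c i} \<and> s i \<notin> set P \<and> c i \<notin> set P"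
    and Ecs: "\<forall>i\<in>{1..r}. E' (c i) (s i)"
  shows "k \<le> m \<Longrightarrow> is_DNS V' E' (P @ map c [1..<k+1])"
proof (induction k)
  case 0 then show ?case using DP by simp
next
  case (Suc k)
  let ?pre = "P @ map c [1..<k+1]"
  have i: "Suc k \<in> {1..r}" "Suc k \<in> {1..m}" using Suc.prems m by auto
  have D: "is_DNS V' E' ?pre" using Suc by simp
  have nin: "c (Suc k) \<notin> set ?pre" using Ns i by auto
  have cV: "c (Suc k) \<in> V'" "s (Suc k) \<in> V'" using SCV i by auto
  have w: "s (Suc k) \<in> cnb V' E' (c (Suc k))" using cV Ecs i by (auto simp: cnb_def)
  have "set ?pre \<inter> cnb V' E' (s (Suc k)) \<subseteq> set ?pre \<inter> {s (Suc k), c (Suc k)}" using Ns i by blast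
  also have "\<dots> = {}" using Ns i by auto
  finally have "card (set ?pre \<inter> cnb V' E' (s (Suc k))) \<le> 1" by simp
  then have "is_DNS V' E' (?pre @ [c (Suc k)])" using DNS_app1[OF sE' D nin cV(1) w] by blast
  then show ?case by simp
qed

lemma seq_CS':
  assumes sE': "symE E'" and DP: "is_DNS V' E' P" and SCV: "Ss \<union> Cs \<subseteq> V'" and m: "m \<le> r"
    and Ns: "\<forall>i\<in>{1..m}. cnb V' E' (s i) \<subseteq> {s i, c i} \<and> s i \<notin> set P \<and> c i \<notin> set P"
    and Ecs: "\<forall>i\<in>{1..r}. E' (c i) (s i)"
  shows "k \<le> m \<Longrightarrow> is_DNS V' E' (P @ map c [1..<m+1] @ map s [1..<k+1])"
proof (induction k)
  case 0 then show ?case using seq_C'[OF assms, of m] by simp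
next
  case (Suc k)
  let ?pre = "P @ map c [1..<m+1] @ map s [1..<k+1]"
  have i: "Suc k \<in> {1..r}" "Suc k \<in> {1..m}" using Suc.prems m by auto
  have D: "is_DNS V' E' ?pre" using Suc by simp
  have a: "s (Suc k) \<notin> set P" using Ns i by auto
  have b: "s (Suc k) \<notin> c ` {1..m}"
  proof
    assume "s (Suc k) \<in> c ` {1..m}"
    then obtain j where "j \<in> {1..m}" "s (Suc k) = c j" by auto
    moreover have "j \<in> {1..r}" using calculation m by auto
    ultimately show False using i by simp
  qed
  have cc: "s (Suc k) \<notin> s ` {1..k}"
  proof
    assume "s (Suc k) \<in> s ` {1..k}"
    then obtain j where "j \<in> {1..k}" "s (Suc k) = s j" by auto
    moreover have "j \<in> {1..r}" using calculation i by auto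
    ultimately show False using i by simp
  qed
  have "set ?pre = set P \<union> c ` {1..m} \<union> s ` {1..k}" by auto
  then have nin: "s (Suc k) \<notin> set ?pre" using a b cc by simp
  have sV: "s (Suc k) \<in> V'" using SCV i by auto
  have w: "s (Suc k) \<in> cnb V' E' (s (Suc k))" using sV by (auto simp: cnb_def)
  have "set ?pre \<inter> cnb V' E' (s (Suc k)) \<subseteq> set ?pre \<inter> {s (Suc k), c (Suc k)}" using Ns i by blast
  also have "\<dots> \<subseteq> {c (Suc k)}" using nin by blast
  finally have "card (set ?pre \<inter> cnb V' E' (s (Suc k))) \<le> 1" by (rule card_le1_sub)
  then have "is_DNS V' E' (?pre @ [s (Suc k)])" using DNS_app1[OF sE' D nin sV w] by blast
  then show ?case by simp
qed

lemma mdns_from: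
  assumes g: "good V' E'" and D: "is_DNS V' E' xs" and l: "length xs = length T + card (V' - H)"
  shows "is_MDNS V' E' xs" "dns_num V' E' = length xs"
proof -
  show M: "is_MDNS V' E' xs" unfolding is_MDNS_def using D good_upper(1)[OF g] l by auto
  show "dns_num V' E' = length xs" using dns_num_eq[OF _ M] g by (auto simp: good_def)
qed

lemma setT_V: "set T \<subseteq> V" using T_H HV by blast

lemma part1:
  "dns_num (insert x V) (add_false_twin E (s r) x) = dns_num V E + 1 \<and>
     dns_num V E + 1 = 2 * r + 1 + dns_num H E \<and>
     is_MDNS (insert x V) (add_false_twin E (s r) x)
        (T @ map c [1..<r+1] @ map s [1..<r+1] @ [x])"
proof -
  let ?E = "add_false_twin E (s r) x" and ?V = "insert x V"
  let ?L = "T @ map c [1..<r+1] @ map s [1..<r+1]"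
  have D: "is_DNS ?V ?E ?L" by (rule good_seq[OF good_Sf])
  have nin: "x \<notin> set ?L" using setT_V fresh by auto
  have w: "x \<in> cnb ?V ?E x" by (simp add: cnb_def)
  have "set ?L \<inter> cnb ?V ?E x \<subseteq> {c r}" using setT_V fresh
    by (auto simp: cnb_def add_false_twin_def)
  then have "card (set ?L \<inter> cnb ?V ?E x) \<le> 1" by (rule card_le1_sub)
  then have D2: "is_DNS ?V ?E (?L @ [x])" using DNS_app1[OF sym_ft[OF symE] D nin _ w] by simp
  have l: "length (?L @ [x]) = length T + card (?V - H)" using card_VxmH by simp
  show ?thesis using mdns_from[OF good_Sf D2 l] l card_VxmH dns_G nH by simp
qed

end


context spid begin

lemma part2:
  assumes hyp: "H = {} \<or> a_iso H E = 1"
  shows "dns_num (insert x V) (add_true_twin E (s r) x) = dns_num V E + 1 \<and>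
     dns_num V E + 1 = 2 * r + 1 + dns_num H E \<and>
     is_MDNS (insert x V) (add_true_twin E (s r) x)
        (T @ [s r, x, c r] @ map c [1..<r] @ map s [1..<r])"
proof -
  let ?E = "add_true_twin E (s r) x" and ?V = "insert x V"
  have sE: "symE ?E" by (rule sym_tt[OF symE])
  have D0: "is_DNS ?V ?E T" by (rule good_DT[OF good_St])
  have "set T \<inter> cnb ?V ?E (s r) \<subseteq> {}" using T_H(1)
    by (auto simp: cnb_def add_true_twin_def add_false_twin_def)
  then have c1: "card (set T \<inter> cnb ?V ?E (s r)) \<le> 1" by simp
  have D1: "is_DNS ?V ?E (T @ [s r])"
    by (rule DNS_app1[OF sE D0 _ _ _ c1]) (use T_H(1) in \<open>auto simp: cnb_def\<close>)
  have "set (T @ [s r]) \<inter> cnb ?V ?E x \<subseteq> {s r}" using T_H(1)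
    by (auto simp: cnb_def add_true_twin_def add_false_twin_def)
  then have c2: "card (set (T @ [s r]) \<inter> cnb ?V ?E x) \<le> 1" by (rule card_le1_sub)
  have D2: "is_DNS ?V ?E ((T @ [s r]) @ [x])"
    by (rule DNS_app1[OF sE D1 _ _ _ c2]) (use T_H(1) in \<open>auto simp: cnb_def\<close>)
  have "\<exists>w \<in> cnb ?V ?E (c r). card (set (T @ [s r, x]) \<inter> cnb ?V ?E w) \<le> 1"
  proof (cases "H = {}")
    case True
    then have "T = []" using T_H(1) by auto
    have "set (T @ [s r, x]) \<inter> cnb ?V ?E (c 1) \<subseteq> {}" using \<open>T = []\<close> r2
      by (auto simp: cnb_def add_true_twin_def add_false_twin_def)
    moreover have "c 1 \<in> cnb ?V ?E (c r)" by (auto simp: cnb_def add_true_twin_def add_false_twin_def)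
    ultimately show ?thesis by (metis card.empty subset_empty zero_le_one)
  next
    case False
    then have "a_iso H E = 1" using hyp by simp
    then obtain h0 where h0: "h0 \<in> H" "\<forall>u\<in>H. \<not> E h0 u" unfolding a_iso_def by (auto split: if_splits)
    have "set (T @ [s r, x]) \<inter> cnb ?V ?E h0 \<subseteq> {h0}" using T_H(1) h0 EH_cases[of h0]
      by (auto simp: cnb_def add_true_twin_def add_false_twin_def)
    then have "card (set (T @ [s r, x]) \<inter> cnb ?V ?E h0) \<le> 1" by (rule card_le1_sub)
    moreover have "h0 \<in> cnb ?V ?E (c r)" using h0 hV by (auto simp: cnb_def add_true_twin_def add_false_twin_def)
    ultimately show ?thesis by blast
  qed
  then obtain w where w: "w \<in> cnb ?V ?E (c r)" "card (set (T @ [s r, x]) \<inter> cnb ?V ?E w) \<le> 1" by blast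
  have D3: "is_DNS ?V ?E ((T @ [s r, x]) @ [c r])"
    by (rule DNS_app1[OF sE _ _ _ w]) (use D2 T_H(1) in \<open>auto simp: cnb_def\<close>)
  let ?P = "T @ [s r, x, c r]"
  have Ns: "\<forall>i\<in>{1..r-1}. cnb ?V ?E (s i) \<subseteq> {s i, c i} \<and> s i \<notin> set ?P \<and> c i \<notin> set ?P"
  proof
    fix i assume i: "i \<in> {1..r-1}"
    then have i': "i \<in> {1..r}" "i \<noteq> r" using r2 by auto
    show "cnb ?V ?E (s i) \<subseteq> {s i, c i} \<and> s i \<notin> set ?P \<and> c i \<notin> set ?P"
      using i' T_H(1) by (auto simp: cnb_def add_true_twin_def add_false_twin_def)
  qed
  have Ecs: "\<forall>i\<in>{1..r}. ?E (c i) (s i)" by (auto simp: add_true_twin_def add_false_twin_def)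
  have SCV: "Ss \<union> Cs \<subseteq> ?V" using Vdef by blast
  have D4: "is_DNS ?V ?E (?P @ map c [1..<(r-1)+1] @ map s [1..<(r-1)+1])"
    using seq_CS'[OF sE _ SCV _ Ns Ecs, of "r-1"] D3 by simp
  have rr: "r - 1 + 1 = r" using r2 by simp
  have D5: "is_DNS ?V ?E (T @ [s r, x, c r] @ map c [1..<r] @ map s [1..<r])"
    using D4 unfolding rr by simp
  have l: "length (T @ [s r, x, c r] @ map c [1..<r] @ map s [1..<r]) = length T + card (?V - H)"
    using card_VxmH r2 by simp
  show ?thesis using mdns_from[OF good_St D5 l] l card_VxmH dns_G nH by simp
qed

lemma part4:
  assumes H0: "H = {}"
  shows "dns_num (insert x V) (add_false_twin E (c r) x) = dns_num (insert x V) (add_true_twin E (c r) x) \<and>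
     dns_num (insert x V) (add_true_twin E (c r) x) = dns_num V E + 1 \<and>
     dns_num V E + 1 = 2 * r + 1 \<and>
     is_MDNS (insert x V) (add_false_twin E (c r) x)
        ([s r, c r, x] @ map c [1..<r] @ map s [1..<r]) \<and>
     is_MDNS (insert x V) (add_true_twin E (c r) x)
        ([s r, c r, x] @ map c [1..<r] @ map s [1..<r])"
proof -
  have T0: "T = []" using T_H(1) H0 by auto
  let ?V = "insert x V"
  let ?L = "[s r, c r, x] @ map c [1..<r] @ map s [1..<r]"
  have rr: "r - 1 + 1 = r" using r2 by simp
  have SCV: "Ss \<union> Cs \<subseteq> ?V" using Vdef by blast
  have l: "length ?L = length T + card (?V - H)" using card_VxmH r2 T0 by simp
  have gen: "is_DNS ?V E' ?L"
    if sE: "symE E'"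
      and e1: "cnb ?V E' (c 1) \<inter> {s r, c r} \<subseteq> {c r}" and e2: "c 1 \<in> cnb ?V E' x"
      and e3: "c r \<in> cnb ?V E' (c r)" "s r \<in> cnb ?V E' (s r)"
      and Ns0: "\<forall>i\<in>{1..r-1}. cnb ?V E' (s i) \<subseteq> {s i, c i}"
      and Ecs: "\<forall>i\<in>{1..r}. E' (c i) (s i)" for E'
  proof -
    have D1: "is_DNS ?V E' ([] @ [s r])"
      by (rule DNS_app1[OF sE _ _ _ e3(2)]) auto
    have c2: "card (set [s r] \<inter> cnb ?V E' (c r)) \<le> 1" by (rule card_le1_sub) auto
    have D2: "is_DNS ?V E' ([s r] @ [c r])"
      by (rule DNS_app1[OF sE _ _ _ e3(1) c2]) (use D1 in auto)
    have "set [s r, c r] \<inter> cnb ?V E' (c 1) \<subseteq> {c r}" using e1 by auto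
    then have c3: "card (set [s r, c r] \<inter> cnb ?V E' (c 1)) \<le> 1" by (rule card_le1_sub)
    have D3: "is_DNS ?V E' ([s r, c r] @ [x])"
      by (rule DNS_app1[OF sE _ _ _ e2 c3]) (use D2 in auto)
    have Ns: "\<forall>i\<in>{1..r-1}. cnb ?V E' (s i) \<subseteq> {s i, c i} \<and> s i \<notin> set [s r, c r, x] \<and> c i \<notin> set [s r, c r, x]"
    proof
      fix i assume i: "i \<in> {1..r-1}"
      then have i': "i \<in> {1..r}" "i \<noteq> r" using r2 by auto
      show "cnb ?V E' (s i) \<subseteq> {s i, c i} \<and> s i \<notin> set [s r, c r, x] \<and> c i \<notin> set [s r, c r, x]"
        using i' Ns0 i by auto
    qed
    have "is_DNS ?V E' ([s r, c r, x] @ map c [1..<(r-1)+1] @ map s [1..<(r-1)+1])"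
      using seq_CS'[OF sE _ SCV _ Ns Ecs, of "r-1"] D3 by simp
    then show ?thesis unfolding rr by simp
  qed
  have Df: "is_DNS ?V (add_false_twin E (c r) x) ?L"
  proof (rule gen)
    show "symE (add_false_twin E (c r) x)" by (rule sym_ft[OF symE])
    show "\<forall>i\<in>{1..r-1}. cnb ?V (add_false_twin E (c r) x) (s i) \<subseteq> {s i, c i}"
    proof
      fix i assume i: "i \<in> {1..r-1}"
      then have i': "i \<in> {1..r}" "i \<noteq> r" using r2 by auto
      then show "cnb ?V (add_false_twin E (c r) x) (s i) \<subseteq> {s i, c i}"
        by (auto simp: cnb_def add_false_twin_def)
    qed
  qed (use r2 in \<open>auto simp: cnb_def add_false_twin_def\<close>)
  have Dt: "is_DNS ?V (add_true_twin E (c r) x) ?L"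
  proof (rule gen)
    show "symE (add_true_twin E (c r) x)" by (rule sym_tt[OF symE])
    show "\<forall>i\<in>{1..r-1}. cnb ?V (add_true_twin E (c r) x) (s i) \<subseteq> {s i, c i}"
    proof
      fix i assume i: "i \<in> {1..r-1}"
      then have i': "i \<in> {1..r}" "i \<noteq> r" using r2 by auto
      then show "cnb ?V (add_true_twin E (c r) x) (s i) \<subseteq> {s i, c i}"
        by (auto simp: cnb_def add_true_twin_def add_false_twin_def)
    qed
  qed (use r2 in \<open>auto simp: cnb_def add_true_twin_def add_false_twin_def\<close>)
  show ?thesis using mdns_from[OF good_Cf Df l] mdns_from[OF good_Ct Dt l] l card_VxmH dns_G T0 by simp
qed

end


context spid begin

lemma frame:
  assumes g: "good V' E'" and D: "is_DNS V' E' ys" and l: "length ys = length T + card (V' - H)"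
    and xV: "x \<in> V'"
  obtains pre z u where "z \<in> H \<union> {s r, c r, x}" "u \<in> cnb V' E' z"
    "card (set pre \<inter> cnb V' E' u) \<le> 1" "z \<notin> set pre"
    "\<And>w. w \<in> H \<union> {s r, c r, x} \<Longrightarrow> w \<in> set ys \<Longrightarrow> w \<noteq> z \<Longrightarrow> w \<in> set pre"
    "set pre \<subseteq> set ys" "finite (set pre)"
    "V' - H \<subseteq> set ys" "card (set ys \<inter> H) = length T"
    "is_DNS H E (filter (\<lambda>v. v \<in> H) ys)"
proof -
  have U: "V' - H \<subseteq> set ys" "card (set ys \<inter> H) = length T" using good_upper(2)[OF g D l] by auto
  have F: "is_DNS H E (filter (\<lambda>v. v \<in> H) ys)"
    using DNS_filter[of E' E V' ys H] g D symE unfolding good_def by blast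
  have sE: "symE E'" using g by (simp add: good_def)
  have "s r \<in> V'" using g r_in(1) unfolding good_def by blast
  then have "s r \<in> set ys" using U(1) by auto
  then have "\<exists>w \<in> set ys. w \<in> H \<union> {s r, c r, x}" by blast
  then obtain pre z post where sp: "ys = pre @ z # post" "z \<in> H \<union> {s r, c r, x}"
    "\<forall>w \<in> set post. w \<notin> H \<union> {s r, c r, x}"
    using split_list_last_prop[of ys "\<lambda>w. w \<in> H \<union> {s r, c r, x}"] by blast
  have "is_DNS V' E' ((pre @ [z]) @ post)" using D sp by simp
  then have D2: "is_DNS V' E' (pre @ [z])" by (rule DNS_prefix[OF sE])
  then obtain u where u: "u \<in> cnb V' E' z" "card (set pre \<inter> cnb V' E' u) \<le> 1" "z \<notin> set pre"
    using DNS_snoc[OF sE] by blast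
  show ?thesis
  proof (rule that[OF sp(2) u(1) u(2) u(3) _ _ _ U F])
    fix w assume "w \<in> H \<union> {s r, c r, x}" "w \<in> set ys" "w \<noteq> z"
    then show "w \<in> set pre" using sp by auto
  qed (use sp in auto)
qed

lemma two:
  assumes "card (P \<inter> A) \<le> 1" "finite P" "a \<in> P" "b \<in> P" "a \<in> A" "b \<in> A" "a \<noteq> b"
  shows False
  using card_le1_two[of "P \<inter> A" a b] assms by auto

lemma pairH: assumes "h \<in> H" "h' \<in> H" "E h h'" shows "2 \<le> length T"
proof -
  have hh: "h \<noteq> h'" using assms irr by auto
  have D1: "is_DNS H E ([] @ [h])"
    by (rule DNS_app1[OF symE _ _ _ cnb_self[OF assms(1)]]) (use assms in auto)
  have c: "card (set [h] \<inter> cnb H E h') \<le> 1" by (rule card_le1_sub[of _ h]) auto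
  have D2: "is_DNS H E ([h] @ [h'])"
    by (rule DNS_app1[OF symE _ _ _ cnb_self[OF assms(2)] c]) (use D1 hh assms in auto)
  then show ?thesis using TH by (auto simp: is_MDNS_def dest!: spec[of _ "[h,h']"])
qed

lemma sat3:
  assumes noiso: "\<forall>v\<in>H. \<exists>u\<in>H. E v u" and DF: "is_DNS H E F" and lF: "length F = length T"
    and t: "t \<in> H"
  shows "2 \<le> card (set F \<inter> cnb H E t)"
proof (rule ccontr)
  assume A: "\<not> 2 \<le> card (set F \<inter> cnb H E t)"
  obtain t' where t': "t' \<in> H" "E t t'" using noiso t by blast
  have ne: "t \<noteq> t'" using t' irr by auto
  have tt: "t \<in> cnb H E t" "t' \<in> cnb H E t" using t t' by (auto simp: cnb_def)
  have "\<not> (t \<in> set F \<and> t' \<in> set F)"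
  proof
    assume "t \<in> set F \<and> t' \<in> set F"
    then have "{t, t'} \<subseteq> set F \<inter> cnb H E t" using tt by auto
    then have "card {t, t'} \<le> card (set F \<inter> cnb H E t)" by (intro card_mono) auto
    then show False using A ne by simp
  qed
  then obtain y where y: "y \<in> H" "y \<notin> set F" "t \<in> cnb H E y"
  proof (cases "t \<in> set F")
    case True
    then have "t' \<notin> set F" using \<open>\<not> (t \<in> set F \<and> t' \<in> set F)\<close> by blast
    moreover have "t \<in> cnb H E t'" using t t' symE by (auto simp: cnb_def symE_def)
    ultimately show ?thesis using that t' by blast
  next
    case False then show ?thesis using that t tt by blast
  qed
  show False using saturate[OF symE TH DF lF y] A by simp
qed

end


context spid begin

lemma card2_obtain: assumes "2 \<le> card A" obtains a b where "a \<in> A" "b \<in> A" "a \<noteq> b"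
proof -
  have fin: "finite A" using assms card.infinite by fastforce
  have "\<not> card A \<le> Suc 0" using assms by simp
  then show ?thesis using card_le_Suc0_iff_eq[OF fin] that by blast
qed

lemma card2_other: assumes "2 \<le> card A" obtains a where "a \<in> A" "a \<noteq> z"
  using card2_obtain[OF assms] by metis

lemma F_facts:
  assumes "card (set ys \<inter> H) = length T" "distinct ys"
  shows "length (filter (\<lambda>v. v \<in> H) ys) = length T" "set (filter (\<lambda>v. v \<in> H) ys) = set ys \<inter> H"
proof -
  show "set (filter (\<lambda>v. v \<in> H) ys) = set ys \<inter> H" by auto
  then show "length (filter (\<lambda>v. v \<in> H) ys) = length T"
    using assms by (metis distinct_card distinct_filter)
qed

lemma part3:
  assumes Hne: "H \<noteq> {}" and iso: "a_iso H E = 0"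
  shows "dns_num (insert x V) (add_true_twin E (s r) x) = 2 * r + dns_num H E \<and>
     is_MDNS (insert x V) (add_true_twin E (s r) x)
        (T @ map c [1..<r+1] @ map s [1..<r+1])"
proof -
  let ?E = "add_true_twin E (s r) x" and ?V = "insert x V"
  have noiso: "\<forall>v\<in>H. \<exists>u\<in>H. E v u" using iso unfolding a_iso_def by (auto split: if_splits)
  have nH2: "2 \<le> length T"
  proof -
    obtain h where h: "h \<in> H" using Hne by blast
    then obtain h' where "h' \<in> H" "E h h'" using noiso by blast
    then show ?thesis using pairH h by blast
  qed
  have N_sr: "cnb ?V ?E (s r) \<subseteq> {s r, c r, x}" by (auto simp: cnb_def add_true_twin_def add_false_twin_def)
  have N_x: "cnb ?V ?E x \<subseteq> {s r, c r, x}" by (auto simp: cnb_def add_true_twin_def add_false_twin_def)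
  have M_sr: "{s r, c r, x} \<subseteq> cnb ?V ?E (s r)" by (auto simp: cnb_def add_true_twin_def add_false_twin_def)
  have M_x: "{s r, c r, x} \<subseteq> cnb ?V ?E x" by (auto simp: cnb_def add_true_twin_def add_false_twin_def)
  have M_cr: "{s r, c r, x} \<subseteq> cnb ?V ?E (c r)" by (auto simp: cnb_def add_true_twin_def add_false_twin_def)
  have M_c: "H \<subseteq> cnb ?V ?E (c j) \<and> c r \<in> cnb ?V ?E (c j)" if "j \<in> {1..r}" for j
    using that hV by (cases "j = r") (auto simp: cnb_def add_true_twin_def add_false_twin_def)
  have M_h: "c r \<in> cnb ?V ?E h \<and> cnb H E h \<subseteq> cnb ?V ?E h" if "h \<in> H" for h
    using that hV by (auto simp: cnb_def add_true_twin_def add_false_twin_def)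
  have N_cr: "u = x \<or> u = s r \<or> u \<in> Cs \<or> u \<in> H" if "u \<in> cnb ?V ?E (c r)" for u
  proof -
    have "u = c r \<or> u = x \<or> E (c r) u" using that by (auto simp: cnb_def add_true_twin_def add_false_twin_def)
    then show ?thesis using Ec_cases[of r u] by auto
  qed
  have N_h: "u \<in> H \<or> u \<in> Cs" if "z \<in> H" "u \<in> cnb ?V ?E z" for z u
  proof -
    have "u = z \<or> E z u" using that by (auto simp: cnb_def add_true_twin_def add_false_twin_def)
    then show ?thesis using EH_cases[of z u] that by auto
  qed
  have nofull: False if D: "is_DNS ?V ?E ys" and l: "length ys = length T + card (?V - H)" for ys
  proof -
    obtain z u pre where z: "z \<in> H \<union> {s r, c r, x}" and u: "u \<in> cnb ?V ?E z"
      and cu: "card (set pre \<inter> cnb ?V ?E u) \<le> 1" and zn: "z \<notin> set pre"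
      and inpre: "\<And>w. w \<in> H \<union> {s r, c r, x} \<Longrightarrow> w \<in> set ys \<Longrightarrow> w \<noteq> z \<Longrightarrow> w \<in> set pre"
      and sub: "set pre \<subseteq> set ys" and fp: "finite (set pre)" and U1: "?V - H \<subseteq> set ys" and U2: "card (set ys \<inter> H) = length T"
      and DF: "is_DNS H E (filter (\<lambda>v. v \<in> H) ys)"
      by (rule frame[OF good_St D l insertI1], rule that, assumption+)
    have dys: "distinct ys" using D by (simp add: is_DNS_def)
    note FF = F_facts[OF U2 dys]
    have sat: "2 \<le> card (set ys \<inter> H \<inter> cnb H E t)" if "t \<in> H" for t
      using sat3[OF noiso DF FF(1) that] FF(2) by simp
    have inys: "s r \<in> set ys" "c r \<in> set ys" "x \<in> set ys" using U1 by auto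
    have TWO: "\<And>a b. a \<in> set pre \<Longrightarrow> b \<in> set pre \<Longrightarrow> a \<in> cnb ?V ?E u \<Longrightarrow> b \<in> cnb ?V ?E u \<Longrightarrow> a \<noteq> b \<Longrightarrow> False"
      using two[OF cu fp] by blast
    have twoH: "\<exists>a b. a \<in> set ys \<inter> H \<and> b \<in> set ys \<inter> H \<and> a \<noteq> b \<and> (a \<noteq> z \<or> b \<noteq> z)"
    proof -
      have "2 \<le> card (set ys \<inter> H)" using U2 nH2 by simp
      then obtain a b where "a \<in> set ys \<inter> H" "b \<in> set ys \<inter> H" "a \<noteq> b"
        by (rule card2_obtain)
      then show ?thesis by blast
    qed
    consider "z \<in> H" | "z = s r" | "z = c r" | "z = x" using z by blast
    then show False
    proof cases
      case 1
      have zz: "z \<noteq> s r" "z \<noteq> c r" "z \<noteq> x" using 1 by auto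
      have pre3: "c r \<in> set pre" using inpre inys zz by blast
      have "u \<in> H \<or> u \<in> Cs" using N_h[OF 1 u] .
      then show False
      proof
        assume uH: "u \<in> H"
        have "2 \<le> card (set ys \<inter> H \<inter> cnb H E u)" using sat[OF uH] .
        then obtain a where a: "a \<in> set ys \<inter> H \<inter> cnb H E u" "a \<noteq> z"
          by (rule card2_other)
        have "a \<in> set pre" using a inpre by blast
        moreover have "a \<noteq> c r" using a by auto
        ultimately show False using TWO[OF pre3, of a] M_h[OF uH] a by auto
      next
        assume "u \<in> Cs"
        then obtain j where j: "j \<in> {1..r}" "u = c j" by blast
        obtain a where a: "a \<in> set ys \<inter> H" "a \<noteq> z" using twoH by blast
        have "a \<in> set pre" using a inpre by blast
        moreover have "a \<noteq> c r" using a by auto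
        ultimately show False using TWO[OF pre3, of a] M_c[OF j(1)] j a by auto
      qed
    next
      case 2
      have p: "c r \<in> set pre" "x \<in> set pre" using inpre inys 2 by auto
      have "u \<in> {s r, c r, x}" using N_sr u 2 by blast
      then show False using TWO[OF p] M_sr M_x M_cr by auto
    next
      case 4
      have p: "s r \<in> set pre" "c r \<in> set pre" using inpre inys 4 by auto
      have "u \<in> {s r, c r, x}" using N_x u 4 by blast
      then show False using TWO[OF p] M_sr M_x M_cr by auto
    next
      case 3
      have p: "s r \<in> set pre" "x \<in> set pre" using inpre inys 3 by auto
      have pH: "set ys \<inter> H \<subseteq> set pre"
      proof
        fix w assume w: "w \<in> set ys \<inter> H"
        then have "w \<noteq> c r" using c_notH[OF r_in(1)] by auto
        then show "w \<in> set pre" using inpre[of w] 3 w by blast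
      qed
      consider "u = x" | "u = s r" | "u \<in> Cs" | "u \<in> H" using N_cr u 3 by blast
      then show False
      proof cases
        case 1 then show False using TWO[OF p] M_x by auto
      next
        case 2 then show False using TWO[OF p] M_sr by auto
      next
        case 3
        then obtain j where j: "j \<in> {1..r}" "u = c j" by blast
        obtain a b where ab: "a \<in> set ys \<inter> H" "b \<in> set ys \<inter> H" "a \<noteq> b" using twoH by blast
        show False using TWO[of a b] ab pH M_c[OF j(1)] j by auto
      next
        case 4
        have "2 \<le> card (set ys \<inter> H \<inter> cnb H E u)" using sat[OF 4] .
        then obtain a b where ab: "a \<in> set ys \<inter> H \<inter> cnb H E u" "b \<in> set ys \<inter> H \<inter> cnb H E u" "a \<noteq> b"
          by (rule card2_obtain)
        show False using TWO[of a b] ab pH M_h[OF 4] by auto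
      qed
    qed
  qed
  let ?L = "T @ map c [1..<r+1] @ map s [1..<r+1]"
  have DL: "is_DNS ?V ?E ?L" by (rule good_seq[OF good_St])
  have M: "is_MDNS ?V ?E ?L" unfolding is_MDNS_def
  proof (intro conjI allI impI)
    show "is_DNS ?V ?E ?L" by (rule DL)
    fix ys assume D: "is_DNS ?V ?E ys"
    have "length ys \<le> length T + card (?V - H)" by (rule good_upper(1)[OF good_St D])
    moreover have "length ys \<noteq> length T + card (?V - H)" using nofull D by blast
    ultimately show "length ys \<le> length ?L" using card_VxmH len_seq by simp
  qed
  have "dns_num ?V ?E = length ?L" using dns_num_eq[OF _ M] finV by simp
  then show ?thesis using M len_seq nH by simp
qed

end


context spid begin

lemma nofull5:
  fixes E' :: "'a \<Rightarrow> 'a \<Rightarrow> bool"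
  defines "V' \<equiv> insert x V"
  assumes g: "good V' E'" and Hne: "H \<noteq> {}"
    and A1: "{s r, c r, x} \<subseteq> cnb V' E' (s r)"
    and A2: "\<And>j. j \<in> {1..r} \<Longrightarrow> H \<subseteq> cnb V' E' (c j) \<and> c r \<in> cnb V' E' (c j) \<and> (j \<noteq> r \<longrightarrow> x \<in> cnb V' E' (c j))"
    and A2': "s r \<in> cnb V' E' (c r)"
    and A3: "insert x (insert (s r) H) \<subseteq> cnb V' E' x"
    and A4: "\<And>h. h \<in> H \<Longrightarrow> c r \<in> cnb V' E' h \<and> x \<in> cnb V' E' h \<and> cnb H E h \<subseteq> cnb V' E' h"
    and N1: "cnb V' E' (s r) \<subseteq> {s r, c r, x}"
    and N2: "cnb V' E' (c r) \<subseteq> {x, s r} \<union> Cs \<union> H"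
    and N3: "cnb V' E' x \<subseteq> {x, s r} \<union> Cs \<union> H"
    and N4: "\<And>z. z \<in> H \<Longrightarrow> cnb V' E' z \<subseteq> {x} \<union> Cs \<union> H"
    and D: "is_DNS V' E' ys" and l: "length ys = length T + card (V' - H)"
  shows False
proof -
  have nH1: "1 \<le> length T"
  proof -
    obtain h where h: "h \<in> H" using Hne by blast
    have "is_DNS H E ([] @ [h])"
      by (rule DNS_app1[OF symE _ _ _ cnb_self[OF h]]) (use h in auto)
    then show ?thesis using TH by (auto simp: is_MDNS_def dest!: spec[of _ "[h]"])
  qed
  obtain z u pre where z: "z \<in> H \<union> {s r, c r, x}" and u: "u \<in> cnb V' E' z"
      and cu: "card (set pre \<inter> cnb V' E' u) \<le> 1" and zn: "z \<notin> set pre"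
      and inpre: "\<And>w. w \<in> H \<union> {s r, c r, x} \<Longrightarrow> w \<in> set ys \<Longrightarrow> w \<noteq> z \<Longrightarrow> w \<in> set pre"
      and sub: "set pre \<subseteq> set ys" and fp: "finite (set pre)" and U1: "V' - H \<subseteq> set ys"
      and U2: "card (set ys \<inter> H) = length T"
      and DF: "is_DNS H E (filter (\<lambda>v. v \<in> H) ys)"
    by (rule frame[OF g D l], simp add: V'_def, rule that, assumption+)
  have dys: "distinct ys" using D by (simp add: is_DNS_def)
  note FF = F_facts[OF U2 dys]
  have inys: "s r \<in> set ys" "c r \<in> set ys" "x \<in> set ys" using U1 unfolding V'_def by auto
  have TWO: "\<And>a b. a \<in> set pre \<Longrightarrow> b \<in> set pre \<Longrightarrow> a \<in> cnb V' E' u \<Longrightarrow> b \<in> cnb V' E' u \<Longrightarrow> a \<noteq> b \<Longrightarrow> False"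
    using two[OF cu fp] by blast
  obtain h0 where h0: "h0 \<in> set ys \<inter> H"
  proof -
    have "set ys \<inter> H \<noteq> {}" using U2 nH1 by auto
    then show ?thesis using that by blast
  qed
  have Hw: "\<exists>a. a \<in> set ys \<inter> H \<and> a \<in> cnb V' E' h" if h: "h \<in> H" for h
  proof (cases "h \<in> set ys")
    case True then show ?thesis using h A4[OF h] cnb_self[of h V' E'] hV unfolding V'_def by auto
  next
    case False
    have "h \<notin> set (filter (\<lambda>v. v \<in> H) ys)" using False by simp
    then have "2 \<le> card (set (filter (\<lambda>v. v \<in> H) ys) \<inter> cnb H E h)"
      using saturate[OF symE TH DF FF(1) h _ cnb_self[OF h]] by blast
    then obtain a where "a \<in> set (filter (\<lambda>v. v \<in> H) ys) \<inter> cnb H E h" by (rule card2_other)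
    then show ?thesis using A4[OF h] by auto
  qed
  consider "z \<in> H" | "z = s r" | "z = c r" | "z = x" using z by blast
  then show False
  proof cases
    case 1
    have zz: "z \<noteq> s r" "z \<noteq> c r" "z \<noteq> x" using 1 by auto
    have p: "s r \<in> set pre" "c r \<in> set pre" "x \<in> set pre" using inpre inys zz by blast+
    have "u \<in> {x} \<union> Cs \<union> H" using N4[OF 1] u by blast
    then consider "u = x" | j where "j \<in> {1..r}" "u = c j" | "u \<in> H" by blast
    then show False
    proof cases
      case 1 then show False using TWO[OF p(1) p(3)] A3 by auto
    next
      case (2 j)
      show False
      proof (cases "j = r")
        case True then show False using TWO[OF p(1) p(2)] A2' A2[OF 2(1)] 2 by auto
      next
        case False then show False using TWO[OF p(2) p(3)] A2[OF 2(1)] 2 by auto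
      qed
    next
      case 3 then show False using TWO[OF p(2) p(3)] A4[OF 3] by auto
    qed
  next
    case 2
    have p: "c r \<in> set pre" "x \<in> set pre" using inpre inys 2 by auto
    have h0p: "h0 \<in> set pre" using inpre[of h0] h0 2 s_notH[OF r_in(1)] by blast
    have h0n: "h0 \<noteq> c r" "h0 \<noteq> x" using h0 by auto
    have "u \<in> {s r, c r, x}" using N1 u 2 by blast
    then consider "u = s r" | "u = c r" | "u = x" by blast
    then show False
    proof cases
      case 1 then show False using TWO[OF p] A1 by auto
    next
      case 2 then show False using TWO[OF p(1) h0p] A2[OF r_in(1)] h0 h0n by auto
    next
      case 3 then show False using TWO[OF p(2) h0p] A3 h0 h0n by auto
    qed
  next
    case 3
    have p: "s r \<in> set pre" "x \<in> set pre" using inpre inys 3 by auto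
    have pH: "set ys \<inter> H \<subseteq> set pre"
    proof
      fix w assume w: "w \<in> set ys \<inter> H"
      then have "w \<noteq> c r" using c_notH[OF r_in(1)] by auto
      then show "w \<in> set pre" using inpre[of w] 3 w by blast
    qed
    have h0p: "h0 \<in> set pre" using pH h0 by auto
    have h0n: "h0 \<noteq> s r" "h0 \<noteq> x" using h0 by auto
    have "u \<in> {x, s r} \<union> Cs \<union> H" using N2 u 3 by blast
    then consider "u = x" | "u = s r" | j where "j \<in> {1..r}" "u = c j" | "u \<in> H" by blast
    then show False
    proof cases
      case 1 then show False using TWO[OF p(2) h0p] A3 h0 h0n by auto
    next
      case 2 then show False using TWO[OF p] A1 by auto
    next
      case (3 j)
      show False
      proof (cases "j = r")
        case True then show False using TWO[OF p(1) h0p] A2' A2[OF 3(1)] 3 h0 h0n by auto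
      next
        case False then show False using TWO[OF p(2) h0p] A2[OF 3(1)] 3 h0 h0n by auto
      qed
    next
      case 4
      obtain a where a: "a \<in> set ys \<inter> H" "a \<in> cnb V' E' u" using Hw[OF 4] by blast
      show False using TWO[OF p(2), of a] a pH A4[OF 4] xH by blast
    qed
  next
    case 4
    have p: "s r \<in> set pre" "c r \<in> set pre" using inpre inys 4 by auto
    have pH: "set ys \<inter> H \<subseteq> set pre"
    proof
      fix w assume w: "w \<in> set ys \<inter> H"
      then have "w \<noteq> x" by auto
      then show "w \<in> set pre" using inpre[of w] 4 w by blast
    qed
    have h0p: "h0 \<in> set pre" using pH h0 by auto
    have h0n: "h0 \<noteq> s r" "h0 \<noteq> c r" using h0 by auto
    have "u \<in> {x, s r} \<union> Cs \<union> H" using N3 u 4 by blast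
    then consider "u = x" | "u = s r" | j where "j \<in> {1..r}" "u = c j" | "u \<in> H" by blast
    then show False
    proof cases
      case 1 then show False using TWO[OF p(1) h0p] A3 h0 h0n by auto
    next
      case 2 then show False using TWO[OF p] A1 by auto
    next
      case (3 j)
      then show False using TWO[OF p(2) h0p] A2[OF 3(1)] 3 h0 h0n by auto
    next
      case 4
      obtain a where a: "a \<in> set ys \<inter> H" "a \<in> cnb V' E' u" using Hw[OF 4] by blast
      show False using TWO[OF p(2), of a] a pH A4[OF 4] c_notH[OF r_in(1)] by blast
    qed
  qed
qed

end


context spid begin

lemma part5_gen:
  assumes g: "good (insert x V) E'" and Hne: "H \<noteq> {}"
    and nf: "\<And>ys. is_DNS (insert x V) E' ys \<Longrightarrow> length ys = length T + card (insert x V - H) \<Longrightarrow> False"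
  shows "dns_num (insert x V) E' = 2 * r + dns_num H E \<and>
         is_MDNS (insert x V) E' (T @ map c [1..<r+1] @ map s [1..<r+1])"
proof -
  let ?L = "T @ map c [1..<r+1] @ map s [1..<r+1]" and ?V = "insert x V"
  have M: "is_MDNS ?V E' ?L" unfolding is_MDNS_def
  proof (intro conjI allI impI)
    show "is_DNS ?V E' ?L" by (rule good_seq[OF g])
    fix ys assume D: "is_DNS ?V E' ys"
    have "length ys \<le> length T + card (?V - H)" by (rule good_upper(1)[OF g D])
    moreover have "length ys \<noteq> length T + card (?V - H)" using nf D by blast
    ultimately show "length ys \<le> length ?L" using card_VxmH len_seq by simp
  qed
  have "dns_num ?V E' = length ?L" using dns_num_eq[OF _ M] finV by simp
  then show ?thesis using M len_seq nH by simp
qed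

lemma part5:
  assumes Hne: "H \<noteq> {}"
  shows "dns_num (insert x V) (add_false_twin E (c r) x) = dns_num (insert x V) (add_true_twin E (c r) x) \<and>
     dns_num (insert x V) (add_true_twin E (c r) x) = 2 * r + dns_num H E \<and>
     is_MDNS (insert x V) (add_false_twin E (c r) x)
        (T @ map c [1..<r+1] @ map s [1..<r+1]) \<and>
     is_MDNS (insert x V) (add_true_twin E (c r) x)
        (T @ map c [1..<r+1] @ map s [1..<r+1])"
proof -
  have f: "dns_num (insert x V) (add_false_twin E (c r) x) = 2 * r + dns_num H E \<and>
         is_MDNS (insert x V) (add_false_twin E (c r) x) (T @ map c [1..<r+1] @ map s [1..<r+1])"
  proof (rule part5_gen[OF good_Cf Hne])
    fix ys assume D: "is_DNS (insert x V) (add_false_twin E (c r) x) ys"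
      and l: "length ys = length T + card (insert x V - H)"
    show False
    proof (rule nofull5[OF good_Cf Hne _ _ _ _ _ _ _ _ _ D l])
      show "{s r, c r, x} \<subseteq> cnb (insert x V) (add_false_twin E (c r) x) (s r)"
        by (auto simp: cnb_def add_false_twin_def)
      show "\<And>j. j \<in> {1..r} \<Longrightarrow> H \<subseteq> cnb (insert x V) (add_false_twin E (c r) x) (c j) \<and>
              c r \<in> cnb (insert x V) (add_false_twin E (c r) x) (c j) \<and>
              (j \<noteq> r \<longrightarrow> x \<in> cnb (insert x V) (add_false_twin E (c r) x) (c j))"
        using hV by (auto simp: cnb_def add_false_twin_def)
      show "s r \<in> cnb (insert x V) (add_false_twin E (c r) x) (c r)"
        by (auto simp: cnb_def add_false_twin_def)
      show "insert x (insert (s r) H) \<subseteq> cnb (insert x V) (add_false_twin E (c r) x) x"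
        using hV by (auto simp: cnb_def add_false_twin_def)
      show "\<And>h. h \<in> H \<Longrightarrow> c r \<in> cnb (insert x V) (add_false_twin E (c r) x) h \<and>
              x \<in> cnb (insert x V) (add_false_twin E (c r) x) h \<and>
              cnb H E h \<subseteq> cnb (insert x V) (add_false_twin E (c r) x) h"
        using hV HV by (auto simp: cnb_def add_false_twin_def)
      show "cnb (insert x V) (add_false_twin E (c r) x) (s r) \<subseteq> {s r, c r, x}"
        by (auto simp: cnb_def add_false_twin_def)
      show "cnb (insert x V) (add_false_twin E (c r) x) (c r) \<subseteq> {x, s r} \<union> Cs \<union> H"
        using Ec_cases[of r] by (auto simp: cnb_def add_false_twin_def)
      show "cnb (insert x V) (add_false_twin E (c r) x) x \<subseteq> {x, s r} \<union> Cs \<union> H"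
        using Ec_cases[of r] by (auto simp: cnb_def add_false_twin_def)
      show "\<And>z. z \<in> H \<Longrightarrow> cnb (insert x V) (add_false_twin E (c r) x) z \<subseteq> {x} \<union> Cs \<union> H"
        using EH_cases by (auto simp: cnb_def add_false_twin_def)
    qed
  qed
  have t: "dns_num (insert x V) (add_true_twin E (c r) x) = 2 * r + dns_num H E \<and>
         is_MDNS (insert x V) (add_true_twin E (c r) x) (T @ map c [1..<r+1] @ map s [1..<r+1])"
  proof (rule part5_gen[OF good_Ct Hne])
    fix ys assume D: "is_DNS (insert x V) (add_true_twin E (c r) x) ys"
      and l: "length ys = length T + card (insert x V - H)"
    show False
    proof (rule nofull5[OF good_Ct Hne _ _ _ _ _ _ _ _ _ D l])
      show "{s r, c r, x} \<subseteq> cnb (insert x V) (add_true_twin E (c r) x) (s r)"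
        by (auto simp: cnb_def add_true_twin_def add_false_twin_def)
      show "\<And>j. j \<in> {1..r} \<Longrightarrow> H \<subseteq> cnb (insert x V) (add_true_twin E (c r) x) (c j) \<and>
              c r \<in> cnb (insert x V) (add_true_twin E (c r) x) (c j) \<and>
              (j \<noteq> r \<longrightarrow> x \<in> cnb (insert x V) (add_true_twin E (c r) x) (c j))"
        using hV by (auto simp: cnb_def add_true_twin_def add_false_twin_def)
      show "s r \<in> cnb (insert x V) (add_true_twin E (c r) x) (c r)"
        by (auto simp: cnb_def add_true_twin_def add_false_twin_def)
      show "insert x (insert (s r) H) \<subseteq> cnb (insert x V) (add_true_twin E (c r) x) x"
        using hV by (auto simp: cnb_def add_true_twin_def add_false_twin_def)
      show "\<And>h. h \<in> H \<Longrightarrow> c r \<in> cnb (insert x V) (add_true_twin E (c r) x) h \<and>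
              x \<in> cnb (insert x V) (add_true_twin E (c r) x) h \<and>
              cnb H E h \<subseteq> cnb (insert x V) (add_true_twin E (c r) x) h"
        using hV HV by (auto simp: cnb_def add_true_twin_def add_false_twin_def)
      show "cnb (insert x V) (add_true_twin E (c r) x) (s r) \<subseteq> {s r, c r, x}"
        by (auto simp: cnb_def add_true_twin_def add_false_twin_def)
      show "cnb (insert x V) (add_true_twin E (c r) x) (c r) \<subseteq> {x, s r} \<union> Cs \<union> H"
        using Ec_cases[of r] by (auto simp: cnb_def add_true_twin_def add_false_twin_def)
      show "cnb (insert x V) (add_true_twin E (c r) x) x \<subseteq> {x, s r} \<union> Cs \<union> H"
        using Ec_cases[of r] by (auto simp: cnb_def add_true_twin_def add_false_twin_def)
      show "\<And>z. z \<in> H \<Longrightarrow> cnb (insert x V) (add_true_twin E (c r) x) z \<subseteq> {x} \<union> Cs \<union> H"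
        using EH_cases by (auto simp: cnb_def add_true_twin_def add_false_twin_def)
    qed
  qed
  show ?thesis using f t by simp
qed

end

theorem proposition9:
  fixes V :: "'a set" and E :: "'a \<Rightarrow> 'a \<Rightarrow> bool" and r :: nat
    and s c :: "nat \<Rightarrow> 'a" and H :: "'a set" and T_H :: "'a list" and x :: 'a
  assumes spider: "thin_spider V E r s c H"
    and r2: "r \<ge> 2"
    and TH: "is_MDNS H E T_H"
    and fresh: "x \<notin> V"
  shows
   "(dns_num (insert x V) (add_false_twin E (s r) x) = dns_num V E + 1 \<and>
     dns_num V E + 1 = 2 * r + 1 + dns_num H E \<and>
     is_MDNS (insert x V) (add_false_twin E (s r) x)
        (T_H @ map c [1..<r+1] @ map s [1..<r+1] @ [x]))
  \<and> ((H = {} \<or> a_iso H E = 1) \<longrightarrow>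
     dns_num (insert x V) (add_true_twin E (s r) x) = dns_num V E + 1 \<and>
     dns_num V E + 1 = 2 * r + 1 + dns_num H E \<and>
     is_MDNS (insert x V) (add_true_twin E (s r) x)
        (T_H @ [s r, x, c r] @ map c [1..<r] @ map s [1..<r]))
  \<and> ((H \<noteq> {} \<and> a_iso H E = 0) \<longrightarrow>
     dns_num (insert x V) (add_true_twin E (s r) x) = 2 * r + dns_num H E \<and>
     is_MDNS (insert x V) (add_true_twin E (s r) x)
        (T_H @ map c [1..<r+1] @ map s [1..<r+1]))
  \<and> (H = {} \<longrightarrow>
     dns_num (insert x V) (add_false_twin E (c r) x) = dns_num (insert x V) (add_true_twin E (c r) x) \<and>
     dns_num (insert x V) (add_true_twin E (c r) x) = dns_num V E + 1 \<and>
     dns_num V E + 1 = 2 * r + 1 \<and>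
     is_MDNS (insert x V) (add_false_twin E (c r) x)
        ([s r, c r, x] @ map c [1..<r] @ map s [1..<r]) \<and>
     is_MDNS (insert x V) (add_true_twin E (c r) x)
        ([s r, c r, x] @ map c [1..<r] @ map s [1..<r]))
  \<and> (H \<noteq> {} \<longrightarrow>
     dns_num (insert x V) (add_false_twin E (c r) x) = dns_num (insert x V) (add_true_twin E (c r) x) \<and>
     dns_num (insert x V) (add_true_twin E (c r) x) = 2 * r + dns_num H E \<and>
     is_MDNS (insert x V) (add_false_twin E (c r) x)
        (T_H @ map c [1..<r+1] @ map s [1..<r+1]) \<and>
     is_MDNS (insert x V) (add_true_twin E (c r) x)
        (T_H @ map c [1..<r+1] @ map s [1..<r+1]))"
proof -
  interpret spid V E r s c H T_H x using spider TH fresh by unfold_locales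
  show ?thesis using part1 part2 part3 part4 part5 by blast
qed


end
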